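(* Let $p$ be a prime, $n\ge1$, and let $Q$ be a symmetric $n\times n$ matrix over $\mathbb{Z}_p$ whose characteristic polynomial is irreducible over $\mathbb{Z}_p$. Then the $p^n$ graph-state bases $\mathcal{B}_A$ with adjacency matrices $A\in\{\sum_{i=0}^{n-1}a_iQ^i:(a_0,\dots,a_{n-1})\in\mathbb{Z}_p^n\}$, together with the computational basis of $(\mathbb{C}^p)^{\otimes n}$, form a complete set of $p^n+1$ mutually unbiased bases of $\mathbb{C}^{p^n}$.
   Context: Let $\omega_p=e^{2\pi i/p}$. On $\mathbb{C}^p$ with computational basis $\{|0\rangle,\dots,|p-1\rangle\}$ let $|+\rangle=p^{-1/2}\sum_{k}|k\rangle$ and $Z=\sum_k\omega_p^k|k\rangle\langle k|$. On $(\mathbb{C}^p)^{\otimes n}$ define $U_{i,i}=\sum_{k=0}^{1}i^k|k\rangle\langle k|_i$ if $p=2$ and $U_{i,i}=\sum_{k=0}^{p-1}\omega_p^{k(k-1)/2}|k\rangle\langle k|_i$ if $p\ge3$, and for $i\ne j$, $U_{i,j}=\sum_{k,l}\omega_p^{kl}|k\rangle\langle k|_i\otimes|l\rangle\langle l|_j$. For a symmetric $n\times n$ matrix $A$ over $\mathbb{Z}_p$ (entries as integers in $\{0,\dots,p-1\}$), $|G_A\rangle=\prod_{i\le j}U_{i,j}^{A_{i,j}}|+\rangle^{\otimes n}$ and $\mathcal{B}_A=\{Z^{m_1}\otimes\cdots\otimes Z^{m_n}|G_A\rangle\}_{m_i\in\mathbb{Z}_p}$. The computational basis is $\{|k_1\rangle\otimes\cdots\otimes|k_n\rangle\}$.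 Bases of $\mathbb{C}^d$ are mutually unbiased if all cross overlaps have squared modulus $1/d$; a complete set consists of $d+1$ pairwise mutually unbiased bases. *)

theory Defs
  imports Complex_Main "HOL-Library.FuncSet"
    "Jordan_Normal_Form.Char_Poly" "Berlekamp_Zassenhaus.Finite_Field"
begin

(* Computational basis labels of (C^p)^{\<otimes>n}: tuples (k_0,...,k_{n-1}) with k_i < p.
   Vectors of (C^p)^{\<otimes>n} = C^{p^n} are functions on these labels (zero elsewhere). *)
definition Conf :: "nat \<Rightarrow> nat \<Rightarrow> (nat \<Rightarrow> nat) set" where
  "Conf p n = {..<n} \<rightarrow>\<^sub>E {..<p}"

definition state_space :: "nat \<Rightarrow> nat \<Rightarrow> ((nat \<Rightarrow> nat) \<Rightarrow> complex) set" where
  "state_space p n = {\<psi>. \<forall>k. k \<notin> Conf p n \<longrightarrow> \<psi> k = 0}"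

definition qinner :: "nat \<Rightarrow> nat \<Rightarrow> ((nat \<Rightarrow> nat) \<Rightarrow> complex) \<Rightarrow> ((nat \<Rightarrow> nat) \<Rightarrow> complex) \<Rightarrow> complex" where
  "qinner p n u v = (\<Sum>k\<in>Conf p n. cnj (u k) * v k)"

definition omega :: "nat \<Rightarrow> complex" where
  "omega p = cis (2 * pi / real p)"

definition uphase :: "nat \<Rightarrow> nat \<Rightarrow> nat \<Rightarrow> (nat \<Rightarrow> nat) \<Rightarrow> complex" where
  "uphase p i j k =
     (if i = j then (if p = 2 then \<i> ^ (k i) else omega p ^ (k i * (k i - 1) div 2))
      else omega p ^ (k i * k j))"

definition U_op :: "nat \<Rightarrow> nat \<Rightarrow> nat \<Rightarrow> ((nat \<Rightarrow> nat) \<Rightarrow> complex) \<Rightarrow> ((nat \<Rightarrow> nat) \<Rightarrow> complex)" where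
  "U_op p i j \<psi> = (\<lambda>k. uphase p i j k * \<psi> k)"

definition plus_state :: "nat \<Rightarrow> nat \<Rightarrow> (nat \<Rightarrow> nat) \<Rightarrow> complex" where
  "plus_state p n = (\<lambda>k. if k \<in> Conf p n then complex_of_real (1 / sqrt (real p ^ n)) else 0)"

(* |G_A> = prod_{i<=j} U_{i,j}^{A_{i,j}} |+>^{\<otimes>n}, A with entries in {0..p-1} *)
definition graph_state :: "nat \<Rightarrow> nat \<Rightarrow> (nat \<Rightarrow> nat \<Rightarrow> nat) \<Rightarrow> (nat \<Rightarrow> nat) \<Rightarrow> complex" where
  "graph_state p n A =
     foldr (\<lambda>(i, j) \<psi>. (U_op p i j ^^ A i j) \<psi>) [(i, j). i \<leftarrow> [0..<n], j \<leftarrow> [i..<n]] (plus_state p n)"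

definition Z_op :: "nat \<Rightarrow> nat \<Rightarrow> (nat \<Rightarrow> nat) \<Rightarrow> ((nat \<Rightarrow> nat) \<Rightarrow> complex) \<Rightarrow> ((nat \<Rightarrow> nat) \<Rightarrow> complex)" where
  "Z_op p n m \<psi> = (\<lambda>k. (\<Prod>i<n. omega p ^ (m i * k i)) * \<psi> k)"

definition graph_basis :: "nat \<Rightarrow> nat \<Rightarrow> (nat \<Rightarrow> nat \<Rightarrow> nat) \<Rightarrow> ((nat \<Rightarrow> nat) \<Rightarrow> complex) set" where
  "graph_basis p n A = {Z_op p n m (graph_state p n A) | m. m \<in> Conf p n}"

definition comp_basis :: "nat \<Rightarrow> nat \<Rightarrow> ((nat \<Rightarrow> nat) \<Rightarrow> complex) set" where
  "comp_basis p n = {(\<lambda>k'. if k' = k then 1 else 0) | k. k \<in> Conf p n}"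

definition is_onb :: "nat \<Rightarrow> nat \<Rightarrow> ((nat \<Rightarrow> nat) \<Rightarrow> complex) set \<Rightarrow> bool" where
  "is_onb p n B \<longleftrightarrow> B \<subseteq> state_space p n \<and> finite B \<and> card B = p ^ n \<and>
     (\<forall>u\<in>B. \<forall>v\<in>B. qinner p n u v = (if u = v then 1 else 0))"

definition mutually_unbiased :: "nat \<Rightarrow> nat \<Rightarrow> ((nat \<Rightarrow> nat) \<Rightarrow> complex) set \<Rightarrow> ((nat \<Rightarrow> nat) \<Rightarrow> complex) set \<Rightarrow> bool" where
  "mutually_unbiased p n B1 B2 \<longleftrightarrow>
     is_onb p n B1 \<and> is_onb p n B2 \<and>
     (\<forall>u\<in>B1. \<forall>v\<in>B2. (cmod (qinner p n u v))\<^sup>2 = 1 / real (p ^ n))"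

definition complete_MUB_set :: "nat \<Rightarrow> nat \<Rightarrow> ((nat \<Rightarrow> nat) \<Rightarrow> complex) set set \<Rightarrow> bool" where
  "complete_MUB_set p n S \<longleftrightarrow> card S = p ^ n + 1 \<and> (\<forall>B\<in>S. is_onb p n B) \<and>
     (\<forall>B1\<in>S. \<forall>B2\<in>S. B1 \<noteq> B2 \<longrightarrow> mutually_unbiased p n B1 B2)"

(* adjacency matrix over Z_p, entries as integers in {0..p-1} *)
definition adj :: "'p::finite mod_ring mat \<Rightarrow> nat \<Rightarrow> nat \<Rightarrow> nat" where
  "adj A i j = nat (to_int_mod_ring (A $$ (i, j)))"

definition poly_span :: "'a::comm_ring_1 mat \<Rightarrow> nat \<Rightarrow> 'a mat set" where
  "poly_span Q n = {mat n n (\<lambda>(i, j). \<Sum>l<n. a l * (Q ^\<^sub>m l) $$ (i, j)) | a. a \<in> {..<n} \<rightarrow>\<^sub>E UNIV}"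

end

theory Submission
  imports Defs
begin



definition phi :: "nat \<Rightarrow> int \<Rightarrow> complex" where
  "phi p x = cis (pi * of_int x / real p)"

lemma phi_add: "phi p (x + y) = phi p x * phi p y"
  unfolding phi_def by (simp add: cis_mult add_divide_distrib distrib_left)

lemma phi_cnj: "cnj (phi p x) = phi p (- x)"
  unfolding phi_def by (simp add: cis_cnj)

lemma phi_zero[simp]: "phi p 0 = 1"
  unfolding phi_def by simp

lemma norm_phi[simp]: "cmod (phi p x) = 1"
  unfolding phi_def by simp

lemma phi_diff: "phi p (x - y) = phi p x * cnj (phi p y)"
  using phi_add[of p x "- y"] by (simp add: phi_cnj)

lemma phi_cnj_mult: "cnj (phi p x) * phi p y = phi p (y - x)"
  by (simp add: phi_diff mult.commute)

lemma phi_period: assumes "p > 0" shows "phi p (2 * int p * t) = 1"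
proof -
  have "pi * of_int (2 * int p * t) / real p = 2 * pi * of_int t" using assms by simp
  thus ?thesis unfolding phi_def by (simp add: cis_multiple_2pi)
qed

lemma phi_cong: assumes "p > 0" "(2 * int p) dvd (x - y)" shows "phi p x = phi p y"
proof -
  obtain t where t: "x - y = 2 * int p * t" using assms(2) by (auto elim: dvdE)
  have "x = y + 2 * int p * t" using t by simp
  thus ?thesis using phi_add phi_period[OF assms(1)] by simp
qed

lemma phi_pow: "phi p x ^ m = phi p (int m * x)"
  unfolding phi_def by (simp add: DeMoivre mult.assoc mult.left_commute)

lemma phi_sum: "phi p (\<Sum>i\<in>I. f i) = (\<Prod>i\<in>I. phi p (f i))"
  by (induct I rule: infinite_finite_induct) (auto simp: phi_add)

lemma omega_pow: "omega p ^ m = phi p (2 * int m)"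
  unfolding omega_def phi_def by (simp add: DeMoivre, simp add: field_simps)

lemma i_phi: "\<i> = phi 2 1"
  unfolding phi_def by (simp add: cis_pi_half)

lemma phi_eq_1: assumes "p > 0" "phi p (2 * c) = 1" shows "int p dvd c"
proof -
  have "cos (pi * of_int (2 * c) / real p) = 1"
    using assms(2) unfolding phi_def by (metis cis.sel(1) one_complex.sel(1))
  then obtain k :: int where k: "pi * of_int (2 * c) / real p = of_int k * 2 * pi"
    using cos_one_2pi_int by blast
  hence "real_of_int c = of_int k * real p" using assms(1) by (simp add: field_simps)
  hence "c = k * int p" by (metis of_int_eq_iff of_int_mult of_int_of_nat_eq)
  thus ?thesis by simp
qed

lemma char_sum1: assumes "p > 0"
  shows "(\<Sum>x<p. phi p (2 * c * int x)) = (if int p dvd c then of_nat p else 0)"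
proof -
  have eq: "phi p (2 * c * int x) = phi p (2 * c) ^ x" for x
    by (simp add: phi_pow mult.commute)
  show ?thesis
  proof (cases "int p dvd c")
    case True
    then obtain t where "c = int p * t" by (auto elim: dvdE)
    hence "phi p (2 * c) = 1" using phi_period[OF assms, of t] by (simp add: mult.assoc)
    thus ?thesis using True by (simp add: eq)
  next
    case False
    hence ne: "phi p (2 * c) \<noteq> 1" using phi_eq_1[OF assms] by blast
    have "phi p (2 * c) ^ p = 1" using phi_period[OF assms, of c] by (simp add: phi_pow mult_ac)
    thus ?thesis using False ne by (simp add: eq sum_gp_strict)
  qed
qed

lemma finite_Conf[simp]: "finite (Conf p n)"
  unfolding Conf_def by (simp add: finite_PiE)

lemma card_Conf: "card (Conf p n) = p ^ n"
  unfolding Conf_def by (simp add: card_PiE)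

lemma char_sum: assumes "p > 0"
  shows "(\<Sum>k\<in>Conf p n. phi p (2 * (\<Sum>i<n. c i * int (k i))))
          = (if \<forall>i<n. int p dvd c i then of_nat p ^ n else 0)"
proof -
  have "(\<Sum>k\<in>Conf p n. phi p (2 * (\<Sum>i<n. c i * int (k i))))
      = (\<Sum>k\<in>Conf p n. \<Prod>i<n. phi p (2 * c i * int (k i)))"
    by (simp add: sum_distrib_left phi_sum mult.assoc)
  also have "\<dots> = (\<Prod>i<n. \<Sum>x<p. phi p (2 * c i * int x))"
    unfolding Conf_def by (subst prod_sum_PiE) auto
  also have "\<dots> = (\<Prod>i<n. (if int p dvd c i then of_nat p else 0))"
    using char_sum1[OF assms] by simp
  also have "\<dots> = (if \<forall>i<n. int p dvd c i then of_nat p ^ n else 0)"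
    by (auto simp: prod_zero_iff)
  finally show ?thesis .
qed




definition FQ :: "nat \<Rightarrow> (nat \<Rightarrow> int) \<Rightarrow> (nat \<Rightarrow> nat \<Rightarrow> int) \<Rightarrow> (nat \<Rightarrow> int) \<Rightarrow> (nat \<Rightarrow> int) \<Rightarrow> int" where
  "FQ n a u L x = (\<Sum>i<n. a i * x i ^ 2) + 2 * (\<Sum>i<n. \<Sum>j\<in>{i<..<n}. u i j * x i * x j)
                  + (\<Sum>i<n. L i * x i)"

definition BL :: "nat \<Rightarrow> (nat \<Rightarrow> int) \<Rightarrow> (nat \<Rightarrow> nat \<Rightarrow> int) \<Rightarrow> (nat \<Rightarrow> int) \<Rightarrow> (nat \<Rightarrow> int) \<Rightarrow> int" where
  "BL n a u x y = (\<Sum>i<n. a i * x i * y i) + (\<Sum>i<n. \<Sum>j\<in>{i<..<n}. u i j * (x i * y j + x j * y i))"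

definition cvec :: "nat \<Rightarrow> (nat \<Rightarrow> int) \<Rightarrow> (nat \<Rightarrow> nat \<Rightarrow> int) \<Rightarrow> (nat \<Rightarrow> int) \<Rightarrow> nat \<Rightarrow> int" where
  "cvec n a u h i = a i * h i + (\<Sum>j\<in>{i<..<n}. u i j * h j) + (\<Sum>j<i. u j i * h j)"

lemma FQ_add: "FQ n a u L (\<lambda>i. x i + y i) = FQ n a u L x + FQ n a u L y + 2 * BL n a u x y"
proof -
  have s1: "(\<Sum>i<n. a i * (x i + y i) ^ 2) = (\<Sum>i<n. a i * x i ^ 2) + (\<Sum>i<n. a i * y i ^ 2) + 2 * (\<Sum>i<n. a i * x i * y i)"
    by (simp add: power2_eq_square algebra_simps sum.distrib sum_distrib_left)
  have s2: "(\<Sum>i<n. \<Sum>j\<in>{i<..<n}. u i j * (x i + y i) * (x j + y j)) =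
     (\<Sum>i<n. \<Sum>j\<in>{i<..<n}. u i j * x i * x j) + (\<Sum>i<n. \<Sum>j\<in>{i<..<n}. u i j * y i * y j)
     + (\<Sum>i<n. \<Sum>j\<in>{i<..<n}. u i j * (x i * y j + x j * y i))"
    by (simp add: algebra_simps sum.distrib)
  have s3: "(\<Sum>i<n. L i * (x i + y i)) = (\<Sum>i<n. L i * x i) + (\<Sum>i<n. L i * y i)"
    by (simp add: algebra_simps sum.distrib)
  show ?thesis unfolding FQ_def BL_def s1 s2 s3 by (simp add: algebra_simps)
qed

lemma FQ_cong: "(\<And>i. i < n \<Longrightarrow> x i = y i) \<Longrightarrow> FQ n a u L x = FQ n a u L y"
  unfolding FQ_def by (intro arg_cong2[where f="(+)"] arg_cong2[where f="(*)"] sum.cong refl) auto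

lemma swap_tri: "(\<Sum>i<(n::nat). \<Sum>j\<in>{i<..<n}. g i j) = (\<Sum>j<n. \<Sum>i<j. (g i j :: int))"
proof (induct n)
  case 0 thus ?case by simp
next
  case (Suc n)
  have "{n<..<Suc n} = {}" by auto
  hence "(\<Sum>i<Suc n. \<Sum>j\<in>{i<..<Suc n}. g i j) = (\<Sum>i<n. \<Sum>j\<in>{i<..<Suc n}. g i j)"
    by simp
  also have "\<dots> = (\<Sum>i<n. g i n + (\<Sum>j\<in>{i<..<n}. g i j))"
  proof (rule sum.cong[OF refl])
    fix i assume "i \<in> {..<n}"
    hence "{i<..<Suc n} = insert n {i<..<n}" by auto
    thus "(\<Sum>j\<in>{i<..<Suc n}. g i j) = g i n + (\<Sum>j\<in>{i<..<n}. g i j)" by simp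
  qed
  also have "\<dots> = (\<Sum>i<n. g i n) + (\<Sum>j<n. \<Sum>i<j. g i j)" by (simp add: sum.distrib Suc)
  finally show ?case by simp
qed

lemma BL_lin: "BL n a u x y = (\<Sum>i<n. x i * cvec n a u y i)"
proof -
  have "(\<Sum>i<n. \<Sum>j\<in>{i<..<n}. u i j * (x j * y i)) = (\<Sum>j<n. \<Sum>i<j. u i j * (x j * y i))"
    by (rule swap_tri)
  also have "\<dots> = (\<Sum>j<n. x j * (\<Sum>i<j. u i j * y i))"
    by (simp add: sum_distrib_left mult_ac)
  finally have e: "(\<Sum>i<n. \<Sum>j\<in>{i<..<n}. u i j * (x j * y i)) = (\<Sum>j<n. x j * (\<Sum>i<j. u i j * y i))" .
  have "BL n a u x y = (\<Sum>i<n. a i * x i * y i) + (\<Sum>i<n. x i * (\<Sum>j\<in>{i<..<n}. u i j * y j))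
       + (\<Sum>i<n. \<Sum>j\<in>{i<..<n}. u i j * (x j * y i))"
    unfolding BL_def by (simp add: algebra_simps sum.distrib sum_distrib_left)
  also have "\<dots> = (\<Sum>i<n. x i * cvec n a u y i)"
    unfolding e cvec_def by (simp add: algebra_simps sum.distrib)
  finally show ?thesis .
qed

lemma FQ_scale: assumes "\<forall>i<n. even (int p * a i + L i)"
  shows "2 * int p dvd FQ n a u L (\<lambda>i. int p * y i)"
proof -
  have e: "FQ n a u L (\<lambda>i. int p * y i) = int p * (\<Sum>i<n. int p * a i * y i ^ 2 + L i * y i)
      + 2 * int p * (int p * (\<Sum>i<n. \<Sum>j\<in>{i<..<n}. u i j * y i * y j))"
    unfolding FQ_def by (simp add: algebra_simps sum.distrib sum_distrib_left power2_eq_square)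
  have ev: "even (\<Sum>i<n. int p * a i * y i ^ 2 + L i * y i)"
  proof (rule dvd_sum)
    fix i assume "i \<in> {..<n}"
    hence "even (int p * a i + L i)" using assms by auto
    thus "even (int p * a i * y i ^ 2 + L i * y i)"
      by (cases "even (y i)") (auto simp: even_add even_mult_iff)
  qed
  then obtain t where "(\<Sum>i<n. int p * a i * y i ^ 2 + L i * y i) = 2 * t" by (auto elim: evenE)
  thus ?thesis unfolding e by (simp add: mult_ac)
qed

lemma BL_scale: "BL n a u x (\<lambda>i. c * y i) = c * BL n a u x y"
  unfolding BL_def by (simp add: algebra_simps sum.distrib sum_distrib_left)

lemma FQ_period: assumes "\<forall>i<n. even (int p * a i + L i)"
  shows "2 * int p dvd FQ n a u L (\<lambda>i. x i + int p * y i) - FQ n a u L x"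
proof -
  have "FQ n a u L (\<lambda>i. x i + int p * y i) - FQ n a u L x
      = FQ n a u L (\<lambda>i. int p * y i) + 2 * int p * BL n a u x y"
    using FQ_add[of n a u L x "\<lambda>i. int p * y i"] BL_scale[of n a u x "int p" y] by simp
  thus ?thesis using FQ_scale[OF assms] by simp
qed




definition shift :: "nat \<Rightarrow> nat \<Rightarrow> (nat \<Rightarrow> nat) \<Rightarrow> (nat \<Rightarrow> nat) \<Rightarrow> (nat \<Rightarrow> nat)" where
  "shift p n l h = restrict (\<lambda>i. (l i + h i) mod p) {..<n}"

lemma shift_Conf: "p > 0 \<Longrightarrow> shift p n l h \<in> Conf p n"
  unfolding shift_def Conf_def by auto

lemma mod_back: assumes "b < (p::nat)" "h < p" shows "((b + h) mod p + p - b) mod p = h"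
proof (cases "b + h < p")
  case True thus ?thesis using assms by simp
next
  case False
  hence "(b + h) mod p = b + h - p" using assms by (simp add: le_mod_geq)
  thus ?thesis using assms False by simp
qed

lemma mod_back2: assumes "b < (p::nat)" "k < p" shows "(b + (k + p - b) mod p) mod p = k"
proof (cases "k + p - b < p")
  case True thus ?thesis using assms by simp
next
  case False
  hence "(k + p - b) mod p = k - b" using assms by (simp add: le_mod_geq)
  thus ?thesis using assms False by simp
qed

lemma sum_shift: assumes "p > 0" "l \<in> Conf p n"
  shows "(\<Sum>k\<in>Conf p n. f k) = (\<Sum>h\<in>Conf p n. f (shift p n l h))"
proof -
  define j where "j k = restrict (\<lambda>i. (k i + p - l i) mod p) {..<n}" for k :: "nat \<Rightarrow> nat"
  have inv1: "j (shift p n l h) = h" if h: "h \<in> Conf p n" for h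
  proof
    fix i show "j (shift p n l h) i = h i"
      using h assms(2) by (cases "i < n") (auto simp: j_def shift_def Conf_def PiE_iff mod_back extensional_def)
  qed
  have inv2: "shift p n l (j k) = k" if k: "k \<in> Conf p n" for k
  proof
    fix i show "shift p n l (j k) i = k i"
      using k assms(2) by (cases "i < n") (auto simp: j_def shift_def Conf_def PiE_iff mod_back2 extensional_def)
  qed
  have jC: "j k \<in> Conf p n" for k using assms(1) unfolding Conf_def j_def by auto
  show ?thesis
    by (rule sum.reindex_bij_witness[where i="shift p n l" and j=j])
       (auto simp: inv1 inv2 jC shift_Conf[OF assms(1)])
qed

lemma Conf_zero: "p > 0 \<Longrightarrow> restrict (\<lambda>_. 0) {..<n} \<in> Conf p n"
  unfolding Conf_def by auto

lemma Conf_eq_zero: assumes "h \<in> Conf p n" "\<forall>i<n. h i = 0" shows "h = restrict (\<lambda>_. 0) {..<n}"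
proof
  fix i show "h i = restrict (\<lambda>_. 0) {..<n} i"
    using assms by (cases "i < n") (auto simp: Conf_def PiE_iff extensional_def)
qed

theorem core_sum:
  assumes p: "p > 0"
    and par: "\<forall>i<n. even (int p * a i + L i)"
    and nd: "\<forall>h\<in>Conf p n. (\<forall>i<n. int p dvd cvec n a u (\<lambda>j. int (h j)) i) \<longrightarrow> (\<forall>i<n. h i = 0)"
  shows "(cmod (\<Sum>k\<in>Conf p n. phi p (FQ n a u L (\<lambda>i. int (k i)))))\<^sup>2 = real p ^ n"
proof -
  define G where "G k = phi p (FQ n a u L (\<lambda>i. int (k i)))" for k
  define S where "S = (\<Sum>k\<in>Conf p n. G k)"
  define z0 where "z0 = (restrict (\<lambda>_. 0) {..<n} :: nat \<Rightarrow> nat)"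
  have z0C: "z0 \<in> Conf p n" using Conf_zero[OF p] z0_def by simp
  have key: "cnj (G l) * G (shift p n l h) =
      phi p (FQ n a u L (\<lambda>i. int (h i))) * phi p (2 * (\<Sum>i<n. cvec n a u (\<lambda>j. int (h j)) i * int (l i)))"
    if l: "l \<in> Conf p n" and h: "h \<in> Conf p n" for l h
  proof -
    define x where "x i = int ((l i + h i) mod p)" for i
    define y where "y i = int ((l i + h i) div p)" for i
    have xy: "(\<lambda>i. int (l i) + int (h i)) = (\<lambda>i. x i + int p * y i)"
      unfolding x_def y_def by (auto simp flip: of_nat_mult of_nat_add)
    have fs: "FQ n a u L (\<lambda>i. int (shift p n l h i)) = FQ n a u L x"
      by (rule FQ_cong) (simp add: shift_def x_def)
    have "cnj (G l) * G (shift p n l h) = phi p (FQ n a u L x - FQ n a u L (\<lambda>i. int (l i)))"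
      unfolding G_def fs by (simp add: phi_cnj_mult)
    also have "\<dots> = phi p (FQ n a u L (\<lambda>i. int (l i) + int (h i)) - FQ n a u L (\<lambda>i. int (l i)))"
    proof (rule phi_cong[OF p])
      show "2 * int p dvd FQ n a u L x - FQ n a u L (\<lambda>i. int (l i)) -
          (FQ n a u L (\<lambda>i. int (l i) + int (h i)) - FQ n a u L (\<lambda>i. int (l i)))"
      proof -
        have d: "2 * int p dvd FQ n a u L (\<lambda>i. x i + int p * y i) - FQ n a u L x"
          by (rule FQ_period[OF par])
        have "FQ n a u L x - FQ n a u L (\<lambda>i. int (l i)) -
          (FQ n a u L (\<lambda>i. int (l i) + int (h i)) - FQ n a u L (\<lambda>i. int (l i)))
          = - (FQ n a u L (\<lambda>i. x i + int p * y i) - FQ n a u L x)" unfolding xy by simp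
        thus ?thesis using d by (simp only: dvd_minus_iff)
      qed
    qed
    also have "\<dots> = phi p (FQ n a u L (\<lambda>i. int (h i)) + 2 * BL n a u (\<lambda>i. int (l i)) (\<lambda>i. int (h i)))"
      using FQ_add[of n a u L "\<lambda>i. int (l i)" "\<lambda>i. int (h i)"] by simp
    also have "\<dots> = phi p (FQ n a u L (\<lambda>i. int (h i))) * phi p (2 * (\<Sum>i<n. cvec n a u (\<lambda>j. int (h j)) i * int (l i)))"
      by (simp add: phi_add BL_lin mult.commute)
    finally show ?thesis .
  qed
  have cz: "(\<forall>i<n. int p dvd cvec n a u (\<lambda>j. int (h j)) i) \<longleftrightarrow> h = z0" if h: "h \<in> Conf p n" for h
  proof
    assume "\<forall>i<n. int p dvd cvec n a u (\<lambda>j. int (h j)) i"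
    thus "h = z0" using nd h Conf_eq_zero z0_def by blast
  next
    assume "h = z0"
    hence "cvec n a u (\<lambda>j. int (h j)) i = 0" if "i < n" for i
      using that unfolding cvec_def z0_def by simp
    thus "\<forall>i<n. int p dvd cvec n a u (\<lambda>j. int (h j)) i" by simp
  qed
  have FQ0: "FQ n a u L (\<lambda>i. int (z0 i)) = 0"
  proof -
    have "FQ n a u L (\<lambda>i. int (z0 i)) = FQ n a u L (\<lambda>i. 0)" by (rule FQ_cong) (simp add: z0_def)
    thus ?thesis by (simp add: FQ_def)
  qed
  have "complex_of_real ((cmod S)\<^sup>2) = cnj S * S"
    by (metis complex_norm_square mult.commute of_real_power)
  also have "\<dots> = (\<Sum>l\<in>Conf p n. \<Sum>k\<in>Conf p n. cnj (G l) * G k)"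
    unfolding S_def by (simp add: sum_product cnj_sum)
  also have "\<dots> = (\<Sum>l\<in>Conf p n. \<Sum>h\<in>Conf p n. cnj (G l) * G (shift p n l h))"
    by (rule sum.cong[OF refl], rule sum_shift[OF p])
  also have "\<dots> = (\<Sum>l\<in>Conf p n. \<Sum>h\<in>Conf p n. phi p (FQ n a u L (\<lambda>i. int (h i))) *
        phi p (2 * (\<Sum>i<n. cvec n a u (\<lambda>j. int (h j)) i * int (l i))))"
    by (intro sum.cong refl key)
  also have "\<dots> = (\<Sum>h\<in>Conf p n. phi p (FQ n a u L (\<lambda>i. int (h i))) *
        (\<Sum>l\<in>Conf p n. phi p (2 * (\<Sum>i<n. cvec n a u (\<lambda>j. int (h j)) i * int (l i)))))"
    by (subst sum.swap) (simp add: sum_distrib_left)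
  also have "\<dots> = (\<Sum>h\<in>Conf p n. phi p (FQ n a u L (\<lambda>i. int (h i))) *
        (if \<forall>i<n. int p dvd cvec n a u (\<lambda>j. int (h j)) i then of_nat p ^ n else 0))"
    by (intro sum.cong refl, subst char_sum[OF p], rule refl)
  also have "\<dots> = (\<Sum>h\<in>Conf p n. if h = z0 then of_nat p ^ n else 0)"
    by (intro sum.cong refl) (auto simp: cz FQ0)
  also have "\<dots> = of_nat p ^ n" using z0C by simp
  finally have "complex_of_real ((cmod S)\<^sup>2) = complex_of_real (real p ^ n)" by simp
  thus ?thesis unfolding S_def G_def using of_real_eq_iff by blast
qed




definition mv :: "nat \<Rightarrow> 'a::comm_ring_1 mat \<Rightarrow> (nat \<Rightarrow> 'a) \<Rightarrow> (nat \<Rightarrow> 'a)" where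
  "mv n Q w = (\<lambda>i. if i < n then (\<Sum>j<n. Q $$ (i, j) * w j) else 0)"

definition Qp :: "nat \<Rightarrow> 'a::comm_ring_1 mat \<Rightarrow> nat \<Rightarrow> (nat \<Rightarrow> 'a) \<Rightarrow> (nat \<Rightarrow> 'a)" where
  "Qp n Q k = mv n Q ^^ k"

definition ev :: "nat \<Rightarrow> 'a::comm_ring_1 mat \<Rightarrow> 'a poly \<Rightarrow> (nat \<Rightarrow> 'a) \<Rightarrow> (nat \<Rightarrow> 'a)" where
  "ev n Q f w = fold_coeffs (\<lambda>a acc i. a * w i + mv n Q acc i) f (\<lambda>_. 0)"

lemma mv_zero[simp]: "mv n Q (\<lambda>_. 0) = (\<lambda>_. 0)"
  unfolding mv_def by auto

lemma mv_add: "mv n Q (\<lambda>j. u j + v j) = (\<lambda>i. mv n Q u i + mv n Q v i)"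
  unfolding mv_def by (auto simp: algebra_simps sum.distrib)

lemma mv_diff: "mv n Q (\<lambda>j. u j - v j) = (\<lambda>i. mv n Q u i - mv n Q v i)"
  unfolding mv_def by (auto simp: algebra_simps sum_subtractf)

lemma mv_smult: "mv n Q (\<lambda>j. c * u j) = (\<lambda>i. c * mv n Q u i)"
  unfolding mv_def by (auto simp: algebra_simps sum_distrib_left)

lemma mv_sum: "mv n Q (\<lambda>j. \<Sum>k\<in>K. F k j) = (\<lambda>i. \<Sum>k\<in>K. mv n Q (F k) i)"
  unfolding mv_def by (rule ext) (auto simp: sum_distrib_left, rule sum.swap)

lemma ev_0[simp]: "ev n Q 0 w = (\<lambda>_. 0)"
  unfolding ev_def by simp

lemma ev_pCons: "ev n Q (pCons a f) w = (\<lambda>i. a * w i + mv n Q (ev n Q f w) i)"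
proof (cases "f = 0")
  case True
  show ?thesis
  proof (cases "a = 0")
    case True thus ?thesis using \<open>f = 0\<close> by simp
  next
    case False
    thus ?thesis using \<open>f = 0\<close> unfolding ev_def
      by (simp add: fold_coeffs_pCons_coeff_not_0_eq)
  qed
next
  case False
  thus ?thesis unfolding ev_def by (simp add: fold_coeffs_pCons_not_0_0_eq)
qed

lemma ev_add: "ev n Q (f + g) w = (\<lambda>i. ev n Q f w i + ev n Q g w i)"
proof (induct f arbitrary: g rule: pCons_induct)
  case 0 thus ?case by simp
next
  case (pCons a f)
  show ?case
  proof (cases g rule: pCons_cases)
    case (pCons b g')
    show ?thesis unfolding pCons add_pCons ev_pCons pCons.hyps(2)
      by (auto simp: mv_add algebra_simps)
  qed
qed

lemma ev_smult: "ev n Q (Polynomial.smult c f) w = (\<lambda>i. c * ev n Q f w i)"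
  by (induct f rule: pCons_induct) (auto simp: ev_pCons mv_smult algebra_simps)

lemma ev_mult: "ev n Q (f * g) w = ev n Q f (ev n Q g w)"
proof (induct f rule: pCons_induct)
  case 0 thus ?case by simp
next
  case (pCons a f)
  show ?case unfolding mult_pCons_left ev_add ev_smult ev_pCons pCons.hyps(2) by simp
qed

lemma ev_one: "ev n Q 1 w = w"
  unfolding one_pCons ev_pCons by simp

lemma ev_zero_vec: "ev n Q f (\<lambda>_. 0) = (\<lambda>_. 0)"
  by (induct f rule: pCons_induct) (auto simp: ev_pCons)

lemma Qp_Suc: "Qp n Q (Suc k) w = mv n Q (Qp n Q k w)"
  unfolding Qp_def by simp

lemma Qp_Suc': "Qp n Q (Suc k) w = Qp n Q k (mv n Q w)"
  unfolding Qp_def by (simp add: funpow_Suc_right del: funpow.simps)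

lemma Qp_zero: "Qp n Q k (\<lambda>_. 0) = (\<lambda>_. 0)"
  by (induct k) (auto simp: Qp_Suc, simp add: Qp_def)

lemma Qp_diff: "Qp n Q k (\<lambda>j. u j - v j) = (\<lambda>i. Qp n Q k u i - Qp n Q k v i)"
  by (induct k) (auto simp: Qp_Suc mv_diff, simp add: Qp_def)

lemma Qp_smult: "Qp n Q k (\<lambda>j. c * u j) = (\<lambda>i. c * Qp n Q k u i)"
  by (induct k) (auto simp: Qp_Suc mv_smult, simp add: Qp_def)

lemma ev_sum: "degree f < N \<Longrightarrow> ev n Q f w = (\<lambda>i. \<Sum>k<N. poly.coeff f k * Qp n Q k w i)"
proof (induct f arbitrary: N rule: pCons_induct)
  case 0 thus ?case by simp
next
  case (pCons a f)
  from pCons.prems obtain M where N: "N = Suc M" by (cases N) auto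
  show ?case
  proof (cases "f = 0")
    case True
    have "(\<Sum>k<N. poly.coeff (pCons a f) k * Qp n Q k w i) = a * w i" for i
      unfolding N sum.lessThan_Suc_shift using True by (simp add: Qp_def)
    thus ?thesis using True by (simp add: ev_pCons)
  next
    case False
    hence dM: "degree f < M" using pCons.prems N by simp
    have "ev n Q (pCons a f) w = (\<lambda>i. a * w i + mv n Q (\<lambda>i. \<Sum>k<M. poly.coeff f k * Qp n Q k w i) i)"
      by (simp add: ev_pCons pCons.hyps(2)[OF dM])
    also have "\<dots> = (\<lambda>i. a * w i + (\<Sum>k<M. poly.coeff f k * Qp n Q (Suc k) w i))"
      by (simp add: mv_sum mv_smult Qp_Suc)
    also have "\<dots> = (\<lambda>i. \<Sum>k<N. poly.coeff (pCons a f) k * Qp n Q k w i)"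
      unfolding N sum.lessThan_Suc_shift by (simp add: Qp_def)
    finally show ?thesis .
  qed
qed




lemma cayley_hamilton_vec:
  fixes Q :: "'a::comm_ring_1 mat"
  assumes Q: "Q \<in> carrier_mat n n" and sup: "\<forall>i\<ge>n. w i = 0"
  shows "ev n Q (char_poly Q) w = (\<lambda>_. 0)"
proof -
  define c where "c = char_poly Q"
  define N where "N = char_poly_matrix Q"
  define M where "M = adj_mat N"
  have NC: "N \<in> carrier_mat n n" using Q N_def by simp
  have MC: "M \<in> carrier_mat n n" using adj_mat(1)[OF NC] M_def by simp
  have NM: "N * M = c \<cdot>\<^sub>m 1\<^sub>m n" using adj_mat(2)[OF NC] unfolding M_def c_def N_def char_poly_def by simp
  have Nent: "N $$ (i, l) = (if i = l then [:0, 1:] else 0) + [:- Q $$ (i, l):]" if "i < n" "l < n" for i l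
    unfolding N_def char_poly_matrix_def using Q that by auto
  have E: "(\<Sum>l<n. N $$ (i, l) * M $$ (l, j)) = (if i = j then c else 0)" if ij: "i < n" "j < n" for i j
  proof -
    have "(N * M) $$ (i, j) = (\<Sum>l<n. N $$ (i, l) * M $$ (l, j))"
      using NC MC ij by (simp add: scalar_prod_def atLeast0LessThan)
    moreover have "(N * M) $$ (i, j) = (if i = j then c else 0)" using ij unfolding NM by simp
    ultimately show ?thesis by simp
  qed
  define Mk where "Mk k l j = poly.coeff (M $$ (l, j)) k" for k l j
  have Ek: "(if k = 0 then 0 else Mk (k - 1) i j) - (\<Sum>l<n. Q $$ (i, l) * Mk k l j)
      = (if i = j then poly.coeff c k else 0)" if ij: "i < n" "j < n" for i j k
  proof -
    have t: "poly.coeff (N $$ (i, l) * M $$ (l, j)) k =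
        (if i = l then (if k = 0 then 0 else Mk (k - 1) l j) else 0) - Q $$ (i, l) * Mk k l j"
      if l: "l < n" for l
    proof -
      have "N $$ (i, l) * M $$ (l, j) = (if i = l then pCons 0 (M $$ (l, j)) else 0)
          + Polynomial.smult (- Q $$ (i, l)) (M $$ (l, j))"
        using Nent[OF ij(1) l] by (simp add: distrib_right)
      thus ?thesis unfolding Mk_def by (cases k) auto
    qed
    have "(if i = j then poly.coeff c k else 0) = poly.coeff (\<Sum>l<n. N $$ (i, l) * M $$ (l, j)) k"
      using E[OF ij] by simp
    also have "\<dots> = (\<Sum>l<n. (if i = l then (if k = 0 then 0 else Mk (k - 1) l j) else 0) - Q $$ (i, l) * Mk k l j)"
      by (simp add: coeff_sum t)
    also have "\<dots> = (if k = 0 then 0 else Mk (k - 1) i j) - (\<Sum>l<n. Q $$ (i, l) * Mk k l j)"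
      using ij by (simp add: sum_subtractf)
    finally show ?thesis by simp
  qed
  define W where "W k = (\<lambda>l. if l < n then \<Sum>j<n. Mk k l j * w j else 0)" for k
  have V: "(\<lambda>i. poly.coeff c k * w i) = (\<lambda>i. (if k = 0 then 0 else W (k - 1) i) - mv n Q (W k) i)" for k
  proof
    fix i show "poly.coeff c k * w i = (if k = 0 then 0 else W (k - 1) i) - mv n Q (W k) i"
    proof (cases "i < n")
      case False thus ?thesis using sup by (simp add: W_def mv_def)
    next
      case True
      have "poly.coeff c k * w i = (\<Sum>j<n. (if i = j then poly.coeff c k else 0) * w j)"
      proof -
        have "(\<Sum>j<n. (if i = j then poly.coeff c k else 0) * w j) = (\<Sum>j<n. if i = j then poly.coeff c k * w j else 0)"
          by (rule sum.cong) auto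
        thus ?thesis using True by simp
      qed
      also have "\<dots> = (\<Sum>j<n. ((if k = 0 then 0 else Mk (k - 1) i j) - (\<Sum>l<n. Q $$ (i, l) * Mk k l j)) * w j)"
        using Ek True by simp
      also have "\<dots> = (\<Sum>j<n. (if k = 0 then 0 else Mk (k - 1) i j) * w j) - (\<Sum>j<n. \<Sum>l<n. Q $$ (i, l) * Mk k l j * w j)"
        by (simp add: algebra_simps sum_subtractf sum_distrib_right sum_distrib_left)
      also have "(\<Sum>j<n. \<Sum>l<n. Q $$ (i, l) * Mk k l j * w j) = (\<Sum>l<n. \<Sum>j<n. Q $$ (i, l) * Mk k l j * w j)"
        by (rule sum.swap)
      also have "\<dots> = mv n Q (W k) i"
        using True by (simp add: mv_def W_def sum_distrib_left mult.assoc)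
      also have "(\<Sum>j<n. (if k = 0 then 0 else Mk (k - 1) i j) * w j) = (if k = 0 then 0 else W (k - 1) i)"
        using True by (simp add: W_def)
      finally show ?thesis .
    qed
  qed
  have tele: "(\<Sum>k<Suc m. Qp n Q k (\<lambda>i. poly.coeff c k * w i) i) = - Qp n Q (Suc m) (W m) i" for m i
  proof (induct m)
    case 0
    show ?case by (subst V) (simp add: Qp_def)
  next
    case (Suc m)
    have "(\<Sum>k<Suc (Suc m). Qp n Q k (\<lambda>i. poly.coeff c k * w i) i)
        = - Qp n Q (Suc m) (W m) i + Qp n Q (Suc m) (\<lambda>i. poly.coeff c (Suc m) * w i) i"
      using Suc by simp
    also have "Qp n Q (Suc m) (\<lambda>i. poly.coeff c (Suc m) * w i) i
        = Qp n Q (Suc m) (W m) i - Qp n Q (Suc m) (mv n Q (W (Suc m))) i"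
      by (subst V) (simp add: Qp_diff)
    also have "Qp n Q (Suc m) (mv n Q (W (Suc m))) = Qp n Q (Suc (Suc m)) (W (Suc m))"
      by (simp only: Qp_Suc'[symmetric])
    finally show ?case by simp
  qed
  define D where "D = degree c + (\<Sum>l<n. \<Sum>j<n. degree (M $$ (l, j)))"
  have degM: "degree (M $$ (l, j)) \<le> D" if "l < n" "j < n" for l j
  proof -
    have "degree (M $$ (l, j)) \<le> (\<Sum>j<n. degree (M $$ (l, j)))"
      using that by (intro member_le_sum) auto
    also have "\<dots> \<le> (\<Sum>l<n. \<Sum>j<n. degree (M $$ (l, j)))"
      using that by (intro member_le_sum[where f="\<lambda>l. \<Sum>j<n. degree (M $$ (l, j))"]) auto
    finally show ?thesis unfolding D_def by simp
  qed
  have W0: "W (Suc D) = (\<lambda>_. 0)"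
  proof
    fix l show "W (Suc D) l = 0"
      unfolding W_def Mk_def using degM by (auto intro!: sum.neutral simp: coeff_eq_0 le_imp_less_Suc)
  qed
  have dc: "degree c < Suc (Suc D)" unfolding D_def by simp
  show ?thesis
  proof
    fix i
    have "ev n Q (char_poly Q) w i = (\<Sum>k<Suc (Suc D). poly.coeff c k * Qp n Q k w i)"
      using ev_sum[OF dc] c_def by simp
    also have "\<dots> = (\<Sum>k<Suc (Suc D). Qp n Q k (\<lambda>i. poly.coeff c k * w i) i)"
      by (simp add: Qp_smult)
    also have "\<dots> = 0" unfolding tele W0 Qp_zero by simp
    finally show "ev n Q (char_poly Q) w i = 0" .
  qed
qed

lemma ev_sup: assumes "\<forall>i\<ge>n. w i = 0" "i \<ge> n" shows "ev n Q f w i = 0"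
  using assms by (induct f rule: pCons_induct) (auto simp: ev_pCons mv_def)

lemma nonsing:
  fixes Q :: "'p::prime_card mod_ring mat"
  assumes Q: "Q \<in> carrier_mat n n" and irr: "irreducible (char_poly Q)"
    and f: "f \<noteq> 0" "degree f < n"
    and sup: "\<forall>i\<ge>n. w i = 0" and z: "\<forall>i<n. ev n Q f w i = 0"
  shows "\<forall>i<n. w i = 0"
proof -
  define c where "c = char_poly Q"
  have dc: "degree c = n" using degree_monic_char_poly[OF Q] c_def by simp
  have ndvd: "\<not> c dvd f" using dvd_imp_degree_le[of c f] f dc by auto
  have "coprime c f" using prime_elem_imp_coprime[OF irreducible_imp_prime_elem[OF irr[folded c_def]] ndvd] .
  hence g: "gcd c f = 1" by (simp add: coprime_iff_gcd_eq_1)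
  define s where "s = fst (bezout_coefficients c f)"
  define t where "t = snd (bezout_coefficients c f)"
  have st: "s * c + t * f = 1" using bezout_coefficients_fst_snd[of c f] g s_def t_def by simp
  have evf: "ev n Q f w = (\<lambda>_. 0)"
  proof
    fix i show "ev n Q f w i = 0" using z ev_sup[OF sup] by (cases "i < n") auto
  qed
  have evc: "ev n Q c w = (\<lambda>_. 0)" using cayley_hamilton_vec[OF Q sup] c_def by simp
  have "w = ev n Q 1 w" by (simp add: ev_one)
  also have "\<dots> = ev n Q (s * c + t * f) w" by (simp add: st)
  also have "\<dots> = (\<lambda>_. 0)" by (simp add: ev_add ev_mult evf evc ev_zero_vec)
  finally show ?thesis by simp
qed




definition Pm :: "'a::comm_ring_1 mat \<Rightarrow> nat \<Rightarrow> (nat \<Rightarrow> 'a) \<Rightarrow> 'a mat" where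
  "Pm Q n a = mat n n (\<lambda>(i, j). \<Sum>l<n. a l * (Q ^\<^sub>m l) $$ (i, j))"

lemma poly_span_Pm: "poly_span Q n = Pm Q n ` ({..<n} \<rightarrow>\<^sub>E UNIV)"
  unfolding poly_span_def Pm_def by auto

lemma powrep:
  fixes Q :: "'a::comm_ring_1 mat"
  assumes Q: "Q \<in> carrier_mat n n" and i: "i < n"
  shows "(\<Sum>j<n. (Q ^\<^sub>m l) $$ (i, j) * w j) = Qp n Q l w i"
  using i
proof (induct l arbitrary: i w)
  case 0
  have "(\<Sum>j<n. (Q ^\<^sub>m 0) $$ (i, j) * w j) = (\<Sum>j<n. if i = j then w j else 0)"
    using Q 0 by (intro sum.cong) auto
  thus ?case using 0 by (simp add: Qp_def)
next
  case (Suc l)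
  have QlC: "Q ^\<^sub>m l \<in> carrier_mat n n" using Q by simp
  have "(\<Sum>j<n. (Q ^\<^sub>m Suc l) $$ (i, j) * w j) = (\<Sum>j<n. \<Sum>t<n. (Q ^\<^sub>m l) $$ (i, t) * Q $$ (t, j) * w j)"
    using Q QlC Suc.prems by (intro sum.cong refl) (simp add: scalar_prod_def atLeast0LessThan sum_distrib_right)
  also have "\<dots> = (\<Sum>t<n. \<Sum>j<n. (Q ^\<^sub>m l) $$ (i, t) * Q $$ (t, j) * w j)" by (rule sum.swap)
  also have "\<dots> = (\<Sum>t<n. (Q ^\<^sub>m l) $$ (i, t) * mv n Q w t)"
    by (intro sum.cong refl) (simp add: mv_def sum_distrib_left mult.assoc)
  also have "\<dots> = Qp n Q l (mv n Q w) i" using Suc.hyps[OF Suc.prems] .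
  also have "\<dots> = Qp n Q (Suc l) w i" by (simp add: Qp_Suc')
  finally show ?case .
qed

lemma pow_comm:
  fixes Q :: "'a::comm_ring_1 mat"
  assumes Q: "Q \<in> carrier_mat n n"
  shows "Q ^\<^sub>m Suc l = Q * Q ^\<^sub>m l"
proof (induct l)
  case 0 thus ?case using Q by simp
next
  case (Suc l)
  have "Q ^\<^sub>m Suc (Suc l) = (Q * Q ^\<^sub>m l) * Q" using Suc by simp
  also have "\<dots> = Q * (Q ^\<^sub>m l * Q)" using Q by (intro assoc_mult_mat) auto
  finally show ?case by simp
qed

lemma pow_sym:
  fixes Q :: "'a::comm_ring_1 mat"
  assumes Q: "Q \<in> carrier_mat n n" and sym: "transpose_mat Q = Q"
  shows "transpose_mat (Q ^\<^sub>m l) = Q ^\<^sub>m l"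
proof (induct l)
  case 0 thus ?case using Q by simp
next
  case (Suc l)
  have "transpose_mat (Q ^\<^sub>m Suc l) = transpose_mat (Q ^\<^sub>m l * Q)" by simp
  also have "\<dots> = transpose_mat Q * transpose_mat (Q ^\<^sub>m l)" using Q by (intro transpose_mult) auto
  also have "\<dots> = Q * Q ^\<^sub>m l" using Suc sym by simp
  finally show ?case using pow_comm[OF Q] by simp
qed

lemma Pm_sym:
  fixes Q :: "'a::comm_ring_1 mat"
  assumes Q: "Q \<in> carrier_mat n n" and sym: "transpose_mat Q = Q" and ij: "i < n" "j < n"
  shows "Pm Q n a $$ (i, j) = Pm Q n a $$ (j, i)"
proof -
  have "(Q ^\<^sub>m l) $$ (i, j) = (Q ^\<^sub>m l) $$ (j, i)" for l
  proof -
    have "(Q ^\<^sub>m l) $$ (i, j) = transpose_mat (Q ^\<^sub>m l) $$ (i, j)" using pow_sym[OF Q sym] by simp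
    also have "\<dots> = (Q ^\<^sub>m l) $$ (j, i)" using Q ij by simp
    finally show ?thesis .
  qed
  thus ?thesis unfolding Pm_def using ij by simp
qed

definition fpoly :: "nat \<Rightarrow> (nat \<Rightarrow> 'a::comm_ring_1) \<Rightarrow> 'a poly" where
  "fpoly n a = (\<Sum>l<n. Polynomial.monom (a l) l)"

lemma coeff_fpoly: "poly.coeff (fpoly n a) k = (if k < n then a k else 0)"
  unfolding fpoly_def by (simp add: coeff_sum coeff_monom)

lemma degree_fpoly: "n \<ge> 1 \<Longrightarrow> degree (fpoly n a) < n"
proof -
  assume n: "n \<ge> 1"
  have "degree (fpoly n a) \<le> n - 1"
    by (rule degree_le) (auto simp: coeff_fpoly)
  thus ?thesis using n by simp
qed

lemma Pm_ev:
  fixes Q :: "'a::comm_ring_1 mat"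
  assumes Q: "Q \<in> carrier_mat n n" and n: "n \<ge> 1" and i: "i < n"
  shows "(\<Sum>j<n. Pm Q n a $$ (i, j) * w j) = ev n Q (fpoly n a) w i"
proof -
  have "(\<Sum>j<n. Pm Q n a $$ (i, j) * w j) = (\<Sum>j<n. \<Sum>l<n. a l * ((Q ^\<^sub>m l) $$ (i, j) * w j))"
    using i by (intro sum.cong refl) (simp add: Pm_def sum_distrib_right mult.assoc)
  also have "\<dots> = (\<Sum>l<n. a l * (\<Sum>j<n. (Q ^\<^sub>m l) $$ (i, j) * w j))"
    by (subst sum.swap) (simp add: sum_distrib_left)
  also have "\<dots> = (\<Sum>l<n. a l * Qp n Q l w i)" using powrep[OF Q i] by simp
  also have "\<dots> = ev n Q (fpoly n a) w i"
  proof -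
    have "ev n Q (fpoly n a) w = (\<lambda>i. \<Sum>k<n. poly.coeff (fpoly n a) k * Qp n Q k w i)"
      by (rule ev_sum[OF degree_fpoly[OF n]])
    thus ?thesis by (simp add: coeff_fpoly)
  qed
  finally show ?thesis .
qed

lemma Pm_nonsing:
  fixes Q :: "'p::prime_card mod_ring mat"
  assumes Q: "Q \<in> carrier_mat n n" and irr: "irreducible (char_poly Q)" and n: "n \<ge> 1"
    and a: "l0 < n" "a l0 \<noteq> 0"
    and sup: "\<forall>i\<ge>n. w i = 0" and z: "\<forall>i<n. (\<Sum>j<n. Pm Q n a $$ (i, j) * w j) = 0"
  shows "\<forall>i<n. w i = 0"
proof (rule nonsing[OF Q irr _ degree_fpoly[OF n] sup])
  have "poly.coeff (fpoly n a) l0 \<noteq> 0" using a by (simp add: coeff_fpoly)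
  thus "fpoly n a \<noteq> 0" by auto
  show "\<forall>i<n. ev n Q (fpoly n a) w i = 0" using z Pm_ev[OF Q n] by simp
qed

lemma Pm_inj:
  fixes Q :: "'p::prime_card mod_ring mat"
  assumes Q: "Q \<in> carrier_mat n n" and irr: "irreducible (char_poly Q)" and n: "n \<ge> 1"
  shows "inj_on (Pm Q n) ({..<n} \<rightarrow>\<^sub>E UNIV)"
proof
  fix a b assume a: "a \<in> {..<n} \<rightarrow>\<^sub>E UNIV" and b: "b \<in> {..<n} \<rightarrow>\<^sub>E UNIV" and eq: "Pm Q n a = Pm Q n b"
  show "a = b"
  proof (rule ccontr)
    assume "a \<noteq> b"
    then obtain l0 where l0: "l0 < n" "a l0 \<noteq> b l0" using a b by (auto simp: PiE_iff extensional_def fun_eq_iff) (metis not_less)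
    define d where "d l = a l - b l" for l
    define w :: "nat \<Rightarrow> 'p mod_ring" where "w i = (if i < n then 1 else 0)" for i
    have z: "\<forall>i<n. (\<Sum>j<n. Pm Q n d $$ (i, j) * w j) = 0"
    proof (intro allI impI)
      fix i assume i: "i < n"
      have "Pm Q n d $$ (i, j) = Pm Q n a $$ (i, j) - Pm Q n b $$ (i, j)" if "j < n" for j
        using i that by (simp add: Pm_def d_def algebra_simps sum_subtractf)
      thus "(\<Sum>j<n. Pm Q n d $$ (i, j) * w j) = 0" using eq by simp
    qed
    have "\<forall>i<n. w i = 0" by (rule Pm_nonsing[OF Q irr n l0(1) _ _ z]) (use l0 in \<open>auto simp: d_def w_def\<close>)
    thus False using n by (auto simp: w_def)
  qed
qed

lemma card_poly_span:
  fixes Q :: "'p::prime_card mod_ring mat"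
  assumes Q: "Q \<in> carrier_mat n n" and irr: "irreducible (char_poly Q)" and n: "n \<ge> 1"
  shows "card (poly_span Q n) = CARD('p) ^ n"
  unfolding poly_span_Pm using Pm_inj[OF Q irr n]
  by (simp add: card_image card_PiE CARD_mod_ring)

lemma of_int_to_int: "of_int (to_int_mod_ring x) = (x :: 'p::prime_card mod_ring)"
  by (simp add: of_int_of_int_mod_ring)

lemma to_int_nonneg: "0 \<le> to_int_mod_ring (x :: 'p::prime_card mod_ring)"
  using range_to_int_mod_ring[where 'a='p] by (metis atLeastLessThan_iff rangeI)

lemma of_int_card_dvd: "int CARD('p) dvd x \<Longrightarrow> (of_int x :: 'p::prime_card mod_ring) = 0"
  by (auto elim!: dvdE simp: of_nat_card_eq_0)

theorem span_nondeg:
  fixes Q :: "'p::prime_card mod_ring mat"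
  assumes Q: "Q \<in> carrier_mat n n" and irr: "irreducible (char_poly Q)" and n: "n \<ge> 1"
    and A: "A \<in> poly_span Q n" and A': "A' \<in> poly_span Q n" and ne: "A \<noteq> A'"
    and h: "\<forall>j. h j < CARD('p)"
    and dv: "\<forall>i<n. int CARD('p) dvd (\<Sum>j<n. (int (adj A' i j) - int (adj A i j)) * int (h j))"
  shows "\<forall>i<n. h i = 0"
proof -
  obtain a where a: "a \<in> {..<n} \<rightarrow>\<^sub>E UNIV" "A = Pm Q n a" using A unfolding poly_span_Pm by auto
  obtain b where b: "b \<in> {..<n} \<rightarrow>\<^sub>E UNIV" "A' = Pm Q n b" using A' unfolding poly_span_Pm by auto
  have "a \<noteq> b" using a b ne by auto
  then obtain l0 where l0: "l0 < n" "b l0 - a l0 \<noteq> 0" using a b by (auto simp: PiE_iff extensional_def fun_eq_iff) (metis not_less)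
  define d where "d l = b l - a l" for l
  define w :: "nat \<Rightarrow> 'p mod_ring" where "w i = (if i < n then of_nat (h i) else 0)" for i
  have ent: "Pm Q n d $$ (i, j) = of_int (int (adj A' i j) - int (adj A i j))" if "i < n" "j < n" for i j
  proof -
    have "Pm Q n d $$ (i, j) = A' $$ (i, j) - A $$ (i, j)"
      using that a b by (simp add: Pm_def d_def algebra_simps sum_subtractf)
    moreover have "int (adj B i j) = to_int_mod_ring (B $$ (i, j))" for B :: "'p mod_ring mat"
      unfolding adj_def by (rule nat_0_le[OF to_int_nonneg])
    ultimately show ?thesis by (simp add: of_int_to_int)
  qed
  have z: "\<forall>i<n. (\<Sum>j<n. Pm Q n d $$ (i, j) * w j) = 0"
  proof (intro allI impI)
    fix i assume i: "i < n"
    have e1: "(\<Sum>j<n. Pm Q n d $$ (i, j) * w j) = of_int (\<Sum>j<n. (int (adj A' i j) - int (adj A i j)) * int (h j))"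
      using i ent by (simp add: w_def)
    have "int CARD('p) dvd (\<Sum>j<n. (int (adj A' i j) - int (adj A i j)) * int (h j))" using dv i by blast
    hence "(of_int (\<Sum>j<n. (int (adj A' i j) - int (adj A i j)) * int (h j)) :: 'p mod_ring) = 0"
      by (rule of_int_card_dvd)
    thus "(\<Sum>j<n. Pm Q n d $$ (i, j) * w j) = 0" unfolding e1 .
  qed
  have w0: "\<forall>i<n. w i = 0" by (rule Pm_nonsing[OF Q irr n l0(1) _ _ z]) (use l0 in \<open>auto simp: d_def w_def\<close>)
  show ?thesis
  proof (intro allI impI)
    fix i assume i: "i < n"
    hence "(of_nat (h i) :: 'p mod_ring) = 0" using w0 unfolding w_def by auto
    hence "CARD('p) dvd h i" by (rule of_nat_0_mod_ring_dvd)
    thus "h i = 0" using h by (metis dvd_imp_le not_le neq0_conv)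
  qed
qed




lemma prod_list_concat': "prod_list (concat xss) = prod_list (map prod_list xss)"
  by (induct xss) auto

lemma prod_list_upt': "prod_list (map f [a..<b]) = prod f {a..<b}"
  using prod.distinct_set_conv_list[of "[a..<b]" f] by simp

lemma prod_pairs: "prod_list (map f [(i, j). i \<leftarrow> [0..<n], j \<leftarrow> [i..<n]]) = (\<Prod>i<n. \<Prod>j\<in>{i..<n}. f (i, j))"
  by (simp add: prod_list_concat' map_concat comp_def prod_list_upt' atLeast0LessThan)

lemma Uop_pow: "(U_op p i j ^^ m) \<psi> = (\<lambda>k. uphase p i j k ^ m * \<psi> k)"
  by (induct m) (auto simp: U_op_def)

lemma foldr_U: "foldr (\<lambda>(i, j) \<psi>. (U_op p i j ^^ A i j) \<psi>) xs \<psi>0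
    = (\<lambda>k. prod_list (map (\<lambda>(i, j). uphase p i j k ^ A i j) xs) * \<psi>0 k)"
  by (induct xs) (auto simp: Uop_pow)

definition eps :: "nat \<Rightarrow> int" where "eps p = (if p = 2 then 0 else 1)"

definition EA :: "nat \<Rightarrow> nat \<Rightarrow> (nat \<Rightarrow> nat \<Rightarrow> nat) \<Rightarrow> (nat \<Rightarrow> nat) \<Rightarrow> int" where
  "EA p n A k = (\<Sum>i<n. int (A i i) * (int (k i) ^ 2 - eps p * int (k i))
      + (\<Sum>j\<in>{i<..<n}. 2 * int (A i j) * int (k i) * int (k j)))"

lemma even_pred_mult: "int (2 * (x * (x - 1) div 2)) = int x ^ 2 - int x"
proof (cases x)
  case 0 thus ?thesis by simp
next
  case (Suc m)
  have "even (Suc m * m)" by simp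
  hence "2 * (Suc m * m div 2) = Suc m * m" by simp
  thus ?thesis using Suc by (simp add: power2_eq_square algebra_simps)
qed

lemma diag_phase: assumes "prime p" "k i < p"
  shows "uphase p i i k ^ m = phi p (int m * (int (k i) ^ 2 - eps p * int (k i)))"
proof (cases "p = 2")
  case True
  hence "k i = 0 \<or> k i = 1" using assms(2) by auto
  thus ?thesis using True by (auto simp: uphase_def eps_def i_phi phi_pow power_mult_distrib power_one)
next
  case False
  have "uphase p i i k ^ m = phi p (2 * int (k i * (k i - 1) div 2)) ^ m"
    using False by (simp add: uphase_def omega_pow)
  also have "\<dots> = phi p (int m * (int (k i) ^ 2 - eps p * int (k i)))"
    using False even_pred_mult[of "k i"] by (simp add: phi_pow eps_def)
  finally show ?thesis .
qed

lemma off_phase: "i \<noteq> j \<Longrightarrow> uphase p i j k ^ m = phi p (2 * int m * int (k i) * int (k j))"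
  by (simp add: uphase_def omega_pow phi_pow mult_ac)

lemma graph_state_Conf:
  assumes p: "prime p" and k: "k \<in> Conf p n"
  shows "graph_state p n A k = complex_of_real (1 / sqrt (real p ^ n)) * phi p (EA p n A k)"
proof -
  have kp: "k i < p" if "i < n" for i using k that unfolding Conf_def by auto
  have "prod_list (map (\<lambda>(i, j). uphase p i j k ^ A i j) [(i, j). i \<leftarrow> [0..<n], j \<leftarrow> [i..<n]])
      = (\<Prod>i<n. \<Prod>j\<in>{i..<n}. uphase p i j k ^ A i j)"
    by (simp add: prod_pairs)
  also have "\<dots> = (\<Prod>i<n. uphase p i i k ^ A i i * (\<Prod>j\<in>{i<..<n}. uphase p i j k ^ A i j))"
  proof (rule prod.cong[OF refl])
    fix i assume "i \<in> {..<n}"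
    have "{i..<n} = insert i {i<..<n}" using \<open>i \<in> {..<n}\<close> by auto
    thus "(\<Prod>j\<in>{i..<n}. uphase p i j k ^ A i j) = uphase p i i k ^ A i i * (\<Prod>j\<in>{i<..<n}. uphase p i j k ^ A i j)"
      by simp
  qed
  also have "\<dots> = (\<Prod>i<n. phi p (int (A i i) * (int (k i) ^ 2 - eps p * int (k i))) *
        (\<Prod>j\<in>{i<..<n}. phi p (2 * int (A i j) * int (k i) * int (k j))))"
    using kp by (intro prod.cong refl arg_cong2[where f="(*)"]) (auto simp: diag_phase[OF p] off_phase)
  also have "\<dots> = phi p (EA p n A k)"
    unfolding EA_def by (simp add: phi_sum phi_add prod.distrib)
  finally have e: "prod_list (map (\<lambda>(i, j). uphase p i j k ^ A i j) [(i, j). i \<leftarrow> [0..<n], j \<leftarrow> [i..<n]])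
      = phi p (EA p n A k)" .
  show ?thesis unfolding graph_state_def foldr_U e using k by (simp add: plus_state_def mult.commute)
qed

lemma graph_state_notConf: "k \<notin> Conf p n \<Longrightarrow> graph_state p n A k = 0"
  unfolding graph_state_def foldr_U by (simp add: plus_state_def)

lemma Z_op_eq: "Z_op p n m \<psi> k = phi p (2 * (\<Sum>i<n. int (m i) * int (k i))) * \<psi> k"
  unfolding Z_op_def by (simp add: omega_pow phi_sum sum_distrib_left mult.assoc)




definition gv :: "nat \<Rightarrow> nat \<Rightarrow> (nat \<Rightarrow> nat \<Rightarrow> nat) \<Rightarrow> (nat \<Rightarrow> nat) \<Rightarrow> (nat \<Rightarrow> nat) \<Rightarrow> complex" where
  "gv p n A m = Z_op p n m (graph_state p n A)"

abbreviation c0 :: "nat \<Rightarrow> nat \<Rightarrow> complex" where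
  "c0 p n \<equiv> complex_of_real (1 / sqrt (real p ^ n))"

lemma gv_Conf: "prime p \<Longrightarrow> k \<in> Conf p n \<Longrightarrow>
   gv p n A m k = c0 p n * phi p (EA p n A k + 2 * (\<Sum>i<n. int (m i) * int (k i)))"
  unfolding gv_def Z_op_eq by (simp add: graph_state_Conf phi_add mult_ac)

lemma gv_notConf: "k \<notin> Conf p n \<Longrightarrow> gv p n A m k = 0"
  unfolding gv_def Z_op_eq by (simp add: graph_state_notConf)

lemma c0_sq: "p > 0 \<Longrightarrow> cnj (c0 p n) * c0 p n = complex_of_real (1 / real p ^ n)"
proof -
  assume p: "p > 0"
  have "(1 / sqrt (real p ^ n)) * (1 / sqrt (real p ^ n)) = 1 / real p ^ n"
  proof -
    have "sqrt (real p ^ n) * sqrt (real p ^ n) = real p ^ n" using p by simp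
    thus ?thesis by (simp add: divide_simps)
  qed
  thus ?thesis by (metis complex_cnj_complex_of_real of_real_mult)
qed

lemma qinner_gv: assumes p: "prime p"
  shows "qinner p n (gv p n A m) (gv p n B m') = complex_of_real (1 / real p ^ n) *
    (\<Sum>k\<in>Conf p n. phi p (EA p n B k - EA p n A k + 2 * (\<Sum>i<n. (int (m' i) - int (m i)) * int (k i))))"
proof -
  have p0: "p > 0" using p prime_gt_0_nat by blast
  have "qinner p n (gv p n A m) (gv p n B m') = (\<Sum>k\<in>Conf p n. complex_of_real (1 / real p ^ n) *
       phi p (EA p n B k - EA p n A k + 2 * (\<Sum>i<n. (int (m' i) - int (m i)) * int (k i))))"
    unfolding qinner_def
  proof (rule sum.cong[OF refl])
    fix k assume k: "k \<in> Conf p n"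
    have "cnj (gv p n A m k) * gv p n B m' k = (cnj (c0 p n) * c0 p n) *
       (cnj (phi p (EA p n A k + 2 * (\<Sum>i<n. int (m i) * int (k i)))) * phi p (EA p n B k + 2 * (\<Sum>i<n. int (m' i) * int (k i))))"
      using k p by (simp add: gv_Conf mult_ac)
    also have "\<dots> = complex_of_real (1 / real p ^ n) *
       phi p (EA p n B k - EA p n A k + 2 * (\<Sum>i<n. (int (m' i) - int (m i)) * int (k i)))"
      unfolding c0_sq[OF p0] phi_cnj_mult by (simp add: algebra_simps sum_subtractf)
    finally show "cnj (gv p n A m k) * gv p n B m' k = complex_of_real (1 / real p ^ n) *
       phi p (EA p n B k - EA p n A k + 2 * (\<Sum>i<n. (int (m' i) - int (m i)) * int (k i)))" .
  qed
  thus ?thesis by (simp add: sum_distrib_left)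
qed

lemma Conf_dvd_eq: assumes "m \<in> Conf p n" "m' \<in> Conf p n"
  shows "(\<forall>i<n. int p dvd int (m' i) - int (m i)) \<longleftrightarrow> m = m'"
proof
  assume d: "\<forall>i<n. int p dvd int (m' i) - int (m i)"
  show "m = m'"
  proof
    fix i show "m i = m' i"
    proof (cases "i < n")
      case True
      have lt: "m i < p" "m' i < p" using assms True unfolding Conf_def by auto
      show ?thesis
      proof (rule ccontr)
        assume ne: "m i \<noteq> m' i"
        hence "int (m' i) - int (m i) \<noteq> 0" by simp
        from dvd_imp_le_int[OF this] d True have "\<bar>int p\<bar> \<le> \<bar>int (m' i) - int (m i)\<bar>" by blast
        thus False using lt by linarith
      qed
    next
      case False thus ?thesis using assms unfolding Conf_def by (auto simp: PiE_iff extensional_def)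
    qed
  qed
qed simp

lemma gv_orth: assumes p: "prime p" and m: "m \<in> Conf p n" and m': "m' \<in> Conf p n"
  shows "qinner p n (gv p n A m) (gv p n A m') = (if m = m' then 1 else 0)"
proof -
  have p0: "p > 0" using p prime_gt_0_nat by blast
  have "qinner p n (gv p n A m) (gv p n A m') = complex_of_real (1 / real p ^ n) *
      (\<Sum>k\<in>Conf p n. phi p (2 * (\<Sum>i<n. (int (m' i) - int (m i)) * int (k i))))"
    using qinner_gv[OF p] by simp
  also have "\<dots> = complex_of_real (1 / real p ^ n) * (if m = m' then of_nat p ^ n else 0)"
    by (subst char_sum[OF p0]) (simp add: Conf_dvd_eq[OF m m'])
  also have "\<dots> = (if m = m' then 1 else 0)" using p0 by simp
  finally show ?thesis .
qed

lemma graph_basis_img: "graph_basis p n A = gv p n A ` Conf p n"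
  unfolding graph_basis_def gv_def by auto

lemma gv_inj: assumes p: "prime p" shows "inj_on (gv p n A) (Conf p n)"
proof
  fix m m' assume m: "m \<in> Conf p n" and m': "m' \<in> Conf p n" and e: "gv p n A m = gv p n A m'"
  have "qinner p n (gv p n A m) (gv p n A m') = 1" unfolding e using gv_orth[OF p m' m'] by simp
  thus "m = m'" using gv_orth[OF p m m'] by (auto split: if_splits)
qed

lemma gb_onb: assumes p: "prime p" shows "is_onb p n (graph_basis p n A)"
  unfolding is_onb_def
proof (intro conjI ballI)
  show "graph_basis p n A \<subseteq> state_space p n"
    unfolding graph_basis_img state_space_def using gv_notConf by auto
  show "finite (graph_basis p n A)" unfolding graph_basis_img by simp
  show "card (graph_basis p n A) = p ^ n"
    unfolding graph_basis_img using card_image[OF gv_inj[OF p]] card_Conf by simp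
  fix u v assume "u \<in> graph_basis p n A" "v \<in> graph_basis p n A"
  then obtain m m' where m: "m \<in> Conf p n" "u = gv p n A m" and m': "m' \<in> Conf p n" "v = gv p n A m'"
    unfolding graph_basis_img by auto
  have "(u = v) = (m = m')" using inj_onD[OF gv_inj[OF p]] m m' by auto
  thus "qinner p n u v = (if u = v then 1 else 0)" using gv_orth[OF p m(1) m'(1)] m m' by simp
qed

definition ev_c :: "(nat \<Rightarrow> nat) \<Rightarrow> (nat \<Rightarrow> nat) \<Rightarrow> complex" where
  "ev_c k = (\<lambda>k'. if k' = k then 1 else 0)"

lemma comp_basis_img: "comp_basis p n = ev_c ` Conf p n"
  unfolding comp_basis_def ev_c_def by auto

lemma qinner_ev: assumes "k \<in> Conf p n" shows "qinner p n (ev_c k) v = v k"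
proof -
  have "qinner p n (ev_c k) v = (\<Sum>x\<in>Conf p n. if x = k then v x else 0)"
    unfolding qinner_def ev_c_def by (rule sum.cong) auto
  thus ?thesis using assms by simp
qed

lemma qinner_ev2: assumes "k \<in> Conf p n" shows "qinner p n v (ev_c k) = cnj (v k)"
proof -
  have "qinner p n v (ev_c k) = (\<Sum>x\<in>Conf p n. if x = k then cnj (v x) else 0)"
    unfolding qinner_def ev_c_def by (rule sum.cong) auto
  thus ?thesis using assms by simp
qed

lemma comp_onb: "is_onb p n (comp_basis p n)"
  unfolding is_onb_def
proof (intro conjI ballI)
  have inj: "inj_on ev_c (Conf p n)"
  proof (rule inj_onI)
    fix x y assume "ev_c x = ev_c y"
    hence "ev_c x x = ev_c y x" by simp
    thus "x = y" by (simp add: ev_c_def split: if_splits)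
  qed
  show "comp_basis p n \<subseteq> state_space p n"
    unfolding comp_basis_img state_space_def ev_c_def by auto
  show "finite (comp_basis p n)" unfolding comp_basis_img by simp
  show "card (comp_basis p n) = p ^ n"
    unfolding comp_basis_img using card_image[OF inj] card_Conf by simp
  fix u v assume "u \<in> comp_basis p n" "v \<in> comp_basis p n"
  then obtain k k' where k: "k \<in> Conf p n" "u = ev_c k" and k': "k' \<in> Conf p n" "v = ev_c k'"
    unfolding comp_basis_img by auto
  have "(u = v) = (k = k')" using inj_onD[OF inj] k k' by auto
  thus "qinner p n u v = (if u = v then 1 else 0)"
    using k k' qinner_ev[OF k(1)] by (simp add: ev_c_def)
qed

lemma cmod_gv: assumes p: "prime p" and k: "k \<in> Conf p n"
  shows "(cmod (gv p n A m k))\<^sup>2 = 1 / real (p ^ n)"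
proof -
  have p0: "p > 0" using p prime_gt_0_nat by blast
  have "cmod (gv p n A m k) = 1 / sqrt (real p ^ n)"
    using gv_Conf[OF p k] by (simp add: norm_mult norm_divide)
  thus ?thesis using p0 by (simp add: power_divide)
qed

lemma comp_gb_mub1: assumes p: "prime p"
  shows "mutually_unbiased p n (comp_basis p n) (graph_basis p n A)"
  unfolding mutually_unbiased_def
proof (intro conjI comp_onb gb_onb[OF p] ballI)
  fix u v assume "u \<in> comp_basis p n" "v \<in> graph_basis p n A"
  then obtain k m where k: "k \<in> Conf p n" "u = ev_c k" and m: "m \<in> Conf p n" "v = gv p n A m"
    unfolding comp_basis_img graph_basis_img by auto
  show "(cmod (qinner p n u v))\<^sup>2 = 1 / real (p ^ n)"
    unfolding k(2) m(2) qinner_ev[OF k(1)] by (rule cmod_gv[OF p k(1)])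
qed

lemma comp_gb_mub2: assumes p: "prime p"
  shows "mutually_unbiased p n (graph_basis p n A) (comp_basis p n)"
  unfolding mutually_unbiased_def
proof (intro conjI comp_onb gb_onb[OF p] ballI)
  fix u v assume "v \<in> comp_basis p n" "u \<in> graph_basis p n A"
  then obtain k m where k: "k \<in> Conf p n" "v = ev_c k" and m: "m \<in> Conf p n" "u = gv p n A m"
    unfolding comp_basis_img graph_basis_img by auto
  show "(cmod (qinner p n u v))\<^sup>2 = 1 / real (p ^ n)"
    unfolding k(2) m(2) qinner_ev2[OF k(1)] complex_mod_cnj by (rule cmod_gv[OF p k(1)])
qed




lemma cvec_sym:
  assumes sym: "\<forall>i<n. \<forall>j<n. S i j = S j i" and i: "i < n"
  shows "cvec n (\<lambda>i. S i i) S h i = (\<Sum>j<n. S i j * h j)"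
proof -
  have split: "{..<n} = {..<i} \<union> insert i {i<..<n}" using i by auto
  have "(\<Sum>j<n. S i j * h j) = (\<Sum>j<i. S i j * h j) + (S i i * h i + (\<Sum>j\<in>{i<..<n}. S i j * h j))"
    unfolding split by (subst sum.union_disjoint) auto
  moreover have "(\<Sum>j<i. S j i * h j) = (\<Sum>j<i. S i j * h j)"
    using sym i by (intro sum.cong refl) auto
  ultimately show ?thesis unfolding cvec_def by simp
qed

lemma EA_FQ:
  "EA p n B k - EA p n A k + 2 * (\<Sum>i<n. (int (m' i) - int (m i)) * int (k i))
   = FQ n (\<lambda>i. int (B i i) - int (A i i)) (\<lambda>i j. int (B i j) - int (A i j))
        (\<lambda>i. - eps p * (int (B i i) - int (A i i)) + 2 * (int (m' i) - int (m i))) (\<lambda>i. int (k i))"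
proof -
  define a where "a i = int (B i i) - int (A i i)" for i
  define u where "u i j = int (B i j) - int (A i j)" for i j
  have "EA p n B k - EA p n A k = (\<Sum>i<n. a i * (int (k i) ^ 2 - eps p * int (k i))
      + (\<Sum>j\<in>{i<..<n}. 2 * u i j * int (k i) * int (k j)))"
    unfolding EA_def sum_subtractf[symmetric]
    by (intro sum.cong refl) (simp add: a_def u_def algebra_simps sum_subtractf)
  also have "\<dots> = (\<Sum>i<n. a i * int (k i) ^ 2) + 2 * (\<Sum>i<n. \<Sum>j\<in>{i<..<n}. u i j * int (k i) * int (k j))
      + (\<Sum>i<n. - eps p * a i * int (k i))"
    by (simp add: sum.distrib sum_distrib_left algebra_simps sum_subtractf sum_negf)
  finally show ?thesis
    unfolding FQ_def a_def[symmetric] u_def[symmetric]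
    by (simp add: sum.distrib sum_distrib_left algebra_simps sum_subtractf sum_negf)
qed

lemma MUB_self: assumes "mutually_unbiased p n B B" "p ^ n \<ge> 2" shows False
proof -
  have onb: "is_onb p n B" using assms(1) unfolding mutually_unbiased_def by simp
  hence "card B = p ^ n" unfolding is_onb_def by simp
  hence "card B \<ge> 2" using assms(2) by simp
  hence "B \<noteq> {}" by auto
  then obtain u where u: "u \<in> B" by auto
  have "qinner p n u u = 1" using onb u unfolding is_onb_def by simp
  moreover have "(cmod (qinner p n u u))\<^sup>2 = 1 / real (p ^ n)" using assms(1) u unfolding mutually_unbiased_def by simp
  ultimately have "1 = 1 / real (p ^ n)" by simp
  hence "real (p ^ n) = 1" by (simp add: field_simps split: if_splits)
  thus False using assms(2) by (metis of_nat_1 of_nat_eq_iff numeral_le_one_iff semiring_norm(69))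
qed

lemma gb_gb_mub:
  fixes Q :: "'p::prime_card mod_ring mat"
  assumes Q: "Q \<in> carrier_mat n n" and sym: "transpose_mat Q = Q" and irr: "irreducible (char_poly Q)"
    and n: "n \<ge> 1" and A: "A \<in> poly_span Q n" and B: "B \<in> poly_span Q n" and ne: "A \<noteq> B"
  shows "mutually_unbiased CARD('p) n (graph_basis CARD('p) n (adj A)) (graph_basis CARD('p) n (adj B))"
  unfolding mutually_unbiased_def
proof (intro conjI gb_onb[OF prime_card[where 'a='p]] ballI)
  define p where "p = CARD('p)"
  have p: "prime p" unfolding p_def by (rule prime_card)
  have p0: "p > 0" using p prime_gt_0_nat by blast
  have adjsym: "adj X i j = adj X j i" if X: "X \<in> poly_span Q n" and ij: "i < n" "j < n" for X i j
  proof -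
    obtain c where "X = Pm Q n c" using X unfolding poly_span_Pm by auto
    thus ?thesis unfolding adj_def using Pm_sym[OF Q sym ij] by simp
  qed
  define S where "S i j = int (adj B i j) - int (adj A i j)" for i j
  have Ssym: "\<forall>i<n. \<forall>j<n. S i j = S j i" unfolding S_def using adjsym A B by auto
  fix u v assume u: "u \<in> graph_basis CARD('p) n (adj A)" and v: "v \<in> graph_basis CARD('p) n (adj B)"
  then obtain m m' where m: "m \<in> Conf p n" "u = gv p n (adj A) m" and m': "m' \<in> Conf p n" "v = gv p n (adj B) m'"
    unfolding graph_basis_img p_def by auto
  define L where "L i = - eps p * S i i + 2 * (int (m' i) - int (m i))" for i
  have par: "\<forall>i<n. even (int p * S i i + L i)"
  proof (intro allI impI)
    fix i assume "i < n"
    show "even (int p * S i i + L i)"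
    proof (cases "p = 2")
      case True thus ?thesis by (simp add: L_def eps_def)
    next
      case False
      hence "odd p" using p prime_odd_nat prime_ge_2_nat[OF p] by force
      hence "odd (int p)" by simp
      thus ?thesis using False by (simp add: L_def eps_def)
    qed
  qed
  have nd: "\<forall>h\<in>Conf p n. (\<forall>i<n. int p dvd cvec n (\<lambda>i. S i i) S (\<lambda>j. int (h j)) i) \<longrightarrow> (\<forall>i<n. h i = 0)"
  proof (intro ballI impI)
    fix h assume h: "h \<in> Conf p n" and dv: "\<forall>i<n. int p dvd cvec n (\<lambda>i. S i i) S (\<lambda>j. int (h j)) i"
    define h' where "h' j = (if j < n then h j else 0)" for j
    have h'p: "\<forall>j. h' j < CARD('p)" using h p0 unfolding h'_def Conf_def p_def by auto
    have dv': "\<forall>i<n. int CARD('p) dvd (\<Sum>j<n. (int (adj B i j) - int (adj A i j)) * int (h' j))"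
    proof (intro allI impI)
      fix i assume i: "i < n"
      have "(\<Sum>j<n. (int (adj B i j) - int (adj A i j)) * int (h' j)) = cvec n (\<lambda>i. S i i) S (\<lambda>j. int (h j)) i"
        unfolding cvec_sym[OF Ssym i] unfolding S_def h'_def by (intro sum.cong refl) auto
      thus "int CARD('p) dvd (\<Sum>j<n. (int (adj B i j) - int (adj A i j)) * int (h' j))"
        using dv i p_def by simp
    qed
    have "\<forall>i<n. h' i = 0" by (rule span_nondeg[OF Q irr n A B ne h'p dv'])
    thus "\<forall>i<n. h i = 0" unfolding h'_def by auto
  qed
  have core: "(cmod (\<Sum>k\<in>Conf p n. phi p (FQ n (\<lambda>i. S i i) S L (\<lambda>i. int (k i)))))\<^sup>2 = real p ^ n"
    by (rule core_sum[OF p0 par nd])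
  have qi: "qinner p n u v = complex_of_real (1 / real p ^ n) *
      (\<Sum>k\<in>Conf p n. phi p (FQ n (\<lambda>i. S i i) S L (\<lambda>i. int (k i))))"
    unfolding m(2) m'(2) qinner_gv[OF p] EA_FQ S_def L_def ..
  have "(cmod (qinner p n u v))\<^sup>2 = (1 / real p ^ n)\<^sup>2 * real p ^ n"
  proof -
    have nc: "cmod (complex_of_real (1 / real p ^ n)) = 1 / real p ^ n"
      by (subst norm_of_real) simp
    show ?thesis unfolding qi norm_mult nc power_mult_distrib core ..
  qed
  also have "\<dots> = 1 / real (p ^ n)" using p0 by (simp add: power2_eq_square field_simps)
  finally show "(cmod (qinner CARD('p) n u v))\<^sup>2 = 1 / real (CARD('p) ^ n)" unfolding p_def .
qed




theorem mainTheorem4: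
  fixes Q :: "'p::prime_card mod_ring mat" and n :: nat
  assumes "n \<ge> 1"
    and "Q \<in> carrier_mat n n"
    and "transpose_mat Q = Q"
    and "irreducible (char_poly Q)"
  shows "complete_MUB_set CARD('p) n
           ((\<lambda>A. graph_basis CARD('p) n (adj A)) ` poly_span Q n \<union> {comp_basis CARD('p) n})"
proof -
  note n = assms(1) and Q = assms(2) and sym = assms(3) and irr = assms(4)
  define p where "p = CARD('p)"
  have p: "prime p" unfolding p_def by (rule prime_card)
  have p2: "p ^ n \<ge> 2"
  proof -
    have "p ^ 1 \<le> p ^ n" using n prime_gt_0_nat[OF p] by (intro power_increasing) auto
    thus ?thesis using prime_ge_2_nat[OF p] by simp
  qed
  define img where "img = (\<lambda>A. graph_basis p n (adj A)) ` poly_span Q n"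
  have mub: "mutually_unbiased p n (graph_basis p n (adj A)) (graph_basis p n (adj B))"
    if "A \<in> poly_span Q n" "B \<in> poly_span Q n" "A \<noteq> B" for A B
    using gb_gb_mub[OF Q sym irr n that] unfolding p_def .
  have inj: "inj_on (\<lambda>A. graph_basis p n (adj A)) (poly_span Q n)"
  proof (rule inj_onI, rule ccontr)
    fix A B assume AB: "A \<in> poly_span Q n" "B \<in> poly_span Q n"
      and e: "graph_basis p n (adj A) = graph_basis p n (adj B)" and ne: "A \<noteq> B"
    show False using MUB_self[OF _ p2] mub[OF AB ne] e by simp
  qed
  have notin: "comp_basis p n \<notin> img"
  proof
    assume "comp_basis p n \<in> img"
    then obtain A where "A \<in> poly_span Q n" "comp_basis p n = graph_basis p n (adj A)" unfolding img_def by (rule imageE)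
    thus False using MUB_self[OF _ p2] comp_gb_mub1[OF p, of n "adj A"] by simp
  qed
  have card: "card (img \<union> {comp_basis p n}) = p ^ n + 1"
  proof -
    have ci: "card img = p ^ n" unfolding img_def using card_image[OF inj] card_poly_span[OF Q irr n] p_def by simp
    moreover have "finite img" using ci p2 by (metis card.infinite not_numeral_le_zero)
    ultimately show ?thesis using notin by simp
  qed
  have onb: "\<forall>B\<in>img \<union> {comp_basis p n}. is_onb p n B"
    unfolding img_def using gb_onb[OF p] comp_onb by auto
  have pair: "\<forall>B1\<in>img \<union> {comp_basis p n}. \<forall>B2\<in>img \<union> {comp_basis p n}. B1 \<noteq> B2 \<longrightarrow> mutually_unbiased p n B1 B2"
  proof (intro ballI impI)
    fix B1 B2 assume B1: "B1 \<in> img \<union> {comp_basis p n}" and B2: "B2 \<in> img \<union> {comp_basis p n}" and ne: "B1 \<noteq> B2"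
    show "mutually_unbiased p n B1 B2"
    proof (cases "B1 = comp_basis p n")
      case True
      hence "B2 \<in> img" using B2 ne by auto
      then obtain B where "B \<in> poly_span Q n" "B2 = graph_basis p n (adj B)" unfolding img_def by (rule imageE)
      thus ?thesis using True comp_gb_mub1[OF p] by simp
    next
      case False
      hence "B1 \<in> img" using B1 by auto
      then obtain A where A: "A \<in> poly_span Q n" "B1 = graph_basis p n (adj A)" unfolding img_def by (rule imageE)
      show ?thesis
      proof (cases "B2 = comp_basis p n")
        case True thus ?thesis using A comp_gb_mub2[OF p] by simp
      next
        case False
        hence "B2 \<in> img" using B2 by auto
        then obtain B where B: "B \<in> poly_span Q n" "B2 = graph_basis p n (adj B)" unfolding img_def by (rule imageE)
        have "A \<noteq> B" using A B ne by auto
        thus ?thesis using mub[OF A(1) B(1)] A B by simp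
      qed
    qed
  qed
  show ?thesis unfolding complete_MUB_set_def using card onb pair unfolding img_def p_def by blast
qed


end
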